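(* Let $T\ge 5$ and let $q$ be an integer with $5\le q\le T$. Let $G=(V,E)$ be a finite connected undirected graph with diameter $D$. Consider any execution of Algorithm FS in which the checkpoint set $\mathit{CP}$ is replaced by $\mathit{CP}_q=\{c\in\mathbb{N}_0 : c\equiv 0 \pmod q \text{ and } T-c>q-1\}$, under arbitrary adversarial activations, with rounds numbered so that round $0$ is the first round at whose beginning some node is active. Then for every round $t\ge qD+\bigl\lfloor \frac{D}{\lfloor T/q\rfloor}\bigr\rfloor\cdot(T\bmod q)$, all nodes are active and have equal clock values $\delta_t(v)$.
   Context: Model (beeping model with arbitrary activations). $G=(V,E)$ is a finite connected undirected graph; $N(v)$ is the set of neighbors of $v$. Time proceeds in synchronous rounds. In each round, each active node either beeps or listens; a listening node learns only whether at least one of its neighbors beeped in that round. Algorithm FS (with checkpoint set $C$). Each node $v$ stores $\delta(v)\in\{0,\dots,T-1\}$, $\mathit{State}(v)\in\{\mathit{Inactive},\mathit{Beep},\mathit{Listen}\}$, $\mathit{Induced}(v)\in\{\mathit{true},\mathit{false}\}$. Initially all nodes are Inactive. A node $v$ is activated in round $t$ if the adversary activates it in round $t$, or $v$ is inactive and some neighbor beeps in round $t-1$; then at the beginning of round $t$, $\delta(v)=1$, $\mathit{State}(v)=\mathit{Beep}$, $\mathit{Induced}(v)=\mathit{true}$. In each round each active node $v$, according to its state at the beginning of the round: (1) if $\mathit{State}(v)=\mathit{Beep}$: beeps; $\delta(v)\gets\delta(v)+1\bmod T$; $\mathit{State}(v)\gets\mathit{Listen}$; (2) if $\mathit{State}(v)=\mathit{Listen}$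 and some neighbor beeps: if $\delta(v)\equiv c-1\pmod T$ for some $c\in C$, then $\delta(v)\gets\delta(v)+2\bmod T$, $\mathit{State}(v)\gets\mathit{Beep}$, $\mathit{Induced}(v)\gets\mathit{true}$; else $\delta(v)\gets\delta(v)+1\bmod T$; (3) if $\mathit{State}(v)=\mathit{Listen}$ and no neighbor beeps: $\delta(v)\gets\delta(v)+1\bmod T$; then if ($\mathit{Induced}(v)=\mathit{true}$ and new $\delta(v)\in C$) or new $\delta(v)=0$: $\mathit{State}(v)\gets\mathit{Beep}$, $\mathit{Induced}(v)\gets\mathit{false}$. $\delta_t(v)$ denotes the value at the beginning of round $t$. *)

theory Defs
  imports Main "HOL-Number_Theory.Cong"
begin

inductive walk_len :: "('v \<Rightarrow> 'v \<Rightarrow> bool) \<Rightarrow> 'v \<Rightarrow> 'v \<Rightarrow> nat \<Rightarrow> bool"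
  for E where
  walk_nil: "walk_len E u u 0"
| walk_cons: "E u w \<Longrightarrow> walk_len E w v n \<Longrightarrow> walk_len E u v (Suc n)"

definition gdist :: "('v \<Rightarrow> 'v \<Rightarrow> bool) \<Rightarrow> 'v \<Rightarrow> 'v \<Rightarrow> nat" where
  "gdist E u v = (LEAST n. walk_len E u v n)"

definition ugraph :: "'v set \<Rightarrow> ('v \<Rightarrow> 'v \<Rightarrow> bool) \<Rightarrow> bool" where
  "ugraph V E \<longleftrightarrow> finite V \<and> V \<noteq> {}
     \<and> (\<forall>u v. E u v \<longrightarrow> u \<in> V \<and> v \<in> V)
     \<and> (\<forall>u v. E u v \<longrightarrow> E v u)
     \<and> (\<forall>u. \<not> E u u)"

definition gconnected :: "'v set \<Rightarrow> ('v \<Rightarrow> 'v \<Rightarrow> bool) \<Rightarrow> bool" where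
  "gconnected V E \<longleftrightarrow> (\<forall>u\<in>V. \<forall>v\<in>V. \<exists>n. walk_len E u v n)"

definition diameter :: "'v set \<Rightarrow> ('v \<Rightarrow> 'v \<Rightarrow> bool) \<Rightarrow> nat" where
  "diameter V E = Max {gdist E u v | u v. u \<in> V \<and> v \<in> V}"

datatype phase = Beep | Listen

text \<open>Node configuration: None = Inactive; Some (State, delta, Induced).\<close>
type_synonym 'v config = "'v \<Rightarrow> (phase \<times> nat \<times> bool) option"

definition beeping :: "'v config \<Rightarrow> 'v \<Rightarrow> bool" where
  "beeping cfg u = (case cfg u of None \<Rightarrow> False | Some (p, _, _) \<Rightarrow> p = Beep)"

definition hears :: "('v \<Rightarrow> 'v \<Rightarrow> bool) \<Rightarrow> 'v config \<Rightarrow> 'v \<Rightarrow> bool" where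
  "hears E cfg v = (\<exists>u. E v u \<and> beeping cfg u)"

text \<open>Configuration at the beginning of round t+1, from that of round t.
  act t v: the adversary activates v in round t (no effect on active nodes).\<close>
definition fs_step :: "nat \<Rightarrow> nat set \<Rightarrow> ('v \<Rightarrow> 'v \<Rightarrow> bool) \<Rightarrow> (nat \<Rightarrow> 'v \<Rightarrow> bool)
    \<Rightarrow> nat \<Rightarrow> 'v config \<Rightarrow> 'v config" where
  "fs_step T C E act t cfg = (\<lambda>v.
     case cfg v of
       None \<Rightarrow> (if act (Suc t) v \<or> hears E cfg v then Some (Beep, 1, True) else None)
     | Some (Beep, d, ind) \<Rightarrow> Some (Listen, (d + 1) mod T, ind)
     | Some (Listen, d, ind) \<Rightarrow>
         (if hears E cfg v then
            (if \<exists>c\<in>C. [int d = int c - 1] (mod int T)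
             then Some (Beep, (d + 2) mod T, True)
             else Some (Listen, (d + 1) mod T, ind))
          else
            (let d' = (d + 1) mod T in
             if (ind \<and> d' \<in> C) \<or> d' = 0 then Some (Beep, d', False)
             else Some (Listen, d', ind))))"

text \<open>Execution: configuration at the beginning of round t. Round 0 is the first round
  at whose beginning some node is active; before it all nodes are inactive.\<close>
primrec fs_run :: "nat \<Rightarrow> nat set \<Rightarrow> ('v \<Rightarrow> 'v \<Rightarrow> bool) \<Rightarrow> (nat \<Rightarrow> 'v \<Rightarrow> bool)
    \<Rightarrow> nat \<Rightarrow> 'v config" where
  "fs_run T C E act 0 = (\<lambda>v. if act 0 v then Some (Beep, 1, True) else None)"
| "fs_run T C E act (Suc t) = fs_step T C E act t (fs_run T C E act t)"

definition CP_q :: "nat \<Rightarrow> nat \<Rightarrow> nat set" where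
  "CP_q q T = {c. c mod q = 0 \<and> int T - int c > int q - 1}"

end

theory Submission
  imports Defs
begin


lemma CP_char: "c \<in> CP_q q T \<longleftrightarrow> c mod q = 0 \<and> c + q \<le> T"
  unfolding CP_q_def by auto

lemma cong_iff:
  assumes "d < T" "\<forall>c\<in>C. c < T"
  shows "(\<exists>c\<in>C. [int d = int c - 1] (mod int T)) \<longleftrightarrow> Suc d mod T \<in> C"
proof
  assume "\<exists>c\<in>C. [int d = int c - 1] (mod int T)"
  then obtain c where c: "c \<in> C" "[int d = int c - 1] (mod int T)" by blast
  then have "[int d + 1 = int c] (mod int T)"
    by (metis cong_add_rcancel diff_add_cancel)
  then have "[Suc d = c] (mod T)"
    by (metis cong_int_iff of_nat_Suc add.commute)
  then have "Suc d mod T = c" using c assms unfolding cong_def by simp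
  then show "Suc d mod T \<in> C" using c by simp
next
  assume h: "Suc d mod T \<in> C"
  have "[Suc d = Suc d mod T] (mod T)" by (simp add: cong_def)
  then have "[int (Suc d) = int (Suc d mod T)] (mod int T)" using cong_int_iff by blast
  then have "[int d = int (Suc d mod T) - 1] (mod int T)"
    by (metis add_diff_cancel_right' cong_diff of_nat_Suc cong_refl add.commute)
  then show "\<exists>c\<in>C. [int d = int c - 1] (mod int T)" using h by blast
qed



locale fsl =
  fixes T q :: nat and E :: "'v \<Rightarrow> 'v \<Rightarrow> bool" and act :: "nat \<Rightarrow> 'v \<Rightarrow> bool"
  assumes T5: "T \<ge> 5" and q5: "5 \<le> q" and qT: "q \<le> T" and symE: "\<And>u v. E u v \<Longrightarrow> E v u"
begin

abbreviation "C \<equiv> CP_q q T"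

definition CPu :: "nat \<Rightarrow> bool" where "CPu x \<longleftrightarrow> x mod T \<in> C"

lemma C_lt: "c \<in> C \<Longrightarrow> c < T"
  using q5 by (auto simp: CP_char)

lemma zero_C: "0 \<in> C" using qT by (simp add: CP_char)

lemma gap:
  assumes "CPu a" "CPu b" "a < b" shows "a + q \<le> b"
proof (rule ccontr)
  assume "\<not> a + q \<le> b"
  then obtain e where e: "b = a + e" "0 < e" "e < q" using assms(3)
    by (metis add_diff_inverse_nat less_diff_conv2 less_imp_le_nat not_less zero_less_diff add.commute)
  have a: "a mod T mod q = 0" "a mod T + q \<le> T" using assms(1) by (auto simp: CPu_def CP_char)
  have b: "b mod T mod q = 0" using assms(2) by (auto simp: CPu_def CP_char)
  have "b mod T = (a mod T + e) mod T" using e(1) by (simp add: mod_add_left_eq)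
  also have "\<dots> = a mod T + e" using a e by simp
  finally have "(a mod T + e) mod q = 0" using b by simp
  then have "e mod q = 0" using a(1) by (metis mod_add_right_eq add.commute mod_add_left_eq add_0)
  then show False using e by simp
qed

lemma gap': "CPu a \<Longrightarrow> CPu b \<Longrightarrow> b < a + 5 \<Longrightarrow> a < b + 5 \<Longrightarrow> a = b"
  using gap[of a b] gap[of b a] q5 by (cases "a < b"; cases "b < a"; auto)

lemma CPu_small: "CPu x \<Longrightarrow> 0 < x \<Longrightarrow> x \<ge> 5"
  using gap[of 0 x] q5 zero_C by (auto simp: CPu_def)

definition cp :: "nat \<Rightarrow> nat" where
  "cp j = q * j + (j div (T div q)) * (T mod q)"

lemma m_pos: "T div q \<ge> 1"
proof -
  have "q div q \<le> T div q" by (rule div_le_mono[OF qT])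
  then show ?thesis using q5 by simp
qed

lemma cp_CPu: "CPu (cp j)"
proof -
  let ?m = "T div q" and ?r = "T mod q"
  have T: "T = ?m * q + ?r" by simp
  have "cp j = (j div ?m) * T + q * (j mod ?m)"
  proof -
    have j: "q * j = q * ((j div ?m) * ?m) + q * (j mod ?m)"
      by (metis div_mult_mod_eq distrib_left)
    have "(j div ?m) * T = (j div ?m) * ?m * q + (j div ?m) * ?r"
      by (metis T add_mult_distrib2 mult.assoc)
    then show ?thesis unfolding cp_def using j by (simp add: algebra_simps)
  qed
  moreover have "q * (j mod ?m) + q \<le> T"
  proof -
    have "j mod ?m < ?m" using m_pos by simp
    then have "q * (j mod ?m) + q \<le> q * ?m" by (metis Suc_leI add.commute mult_Suc_right mult_le_mono2)
    also have "\<dots> \<le> T" by (metis div_times_less_eq_dividend mult.commute)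
    finally show ?thesis .
  qed
  ultimately have "cp j mod T = q * (j mod ?m)" using q5 by simp
  then show ?thesis unfolding CPu_def CP_char
    using \<open>q * (j mod ?m) + q \<le> T\<close> by simp
qed

lemma cp_gap: "cp j + q \<le> cp (Suc j)"
proof -
  have "j div (T div q) \<le> Suc j div (T div q)" by (simp add: div_le_mono)
  then show ?thesis unfolding cp_def by (simp add: mult_le_mono1)
qed

lemma cp_mono: "j \<le> k \<Longrightarrow> cp j \<le> cp k"
proof (induction k)
  case (Suc k) then show ?case using cp_gap[of k] by (cases "j = Suc k") auto
qed simp

lemma cp0: "cp 0 = 0" by (simp add: cp_def)

end


primrec lagr :: "nat \<Rightarrow> nat set \<Rightarrow> ('v \<Rightarrow> 'v \<Rightarrow> bool) \<Rightarrow> (nat \<Rightarrow> 'v \<Rightarrow> bool) \<Rightarrow> nat \<Rightarrow> 'v \<Rightarrow> nat" where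
  "lagr T C E act 0 v = 0"
| "lagr T C E act (Suc t) v = (case fs_run T C E act t v of None \<Rightarrow> Suc t
     | Some (p, d, ind) \<Rightarrow> if p = Listen \<and> hears E (fs_run T C E act t) v \<and> Suc d mod T \<in> C
            then lagr T C E act t v - 1 else lagr T C E act t v)"

context fsl begin

abbreviation "cfg t \<equiv> fs_run T C E act t"
abbreviation "lg t \<equiv> lagr T C E act t"
definition Dl :: "nat \<Rightarrow> 'v \<Rightarrow> nat" where "Dl t v = Suc t - lg t v"

lemma run_Some:
  assumes "cfg t v = Some (p, d, ind)" "d < T"
  shows "cfg (Suc t) v = (if p = Beep then Some (Listen, Suc d mod T, ind)
     else if hears E (cfg t) v then (if Suc d mod T \<in> C then Some (Beep, Suc (Suc d) mod T, True)
          else Some (Listen, Suc d mod T, ind))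
     else if (ind \<and> Suc d mod T \<in> C) \<or> Suc d mod T = 0 then Some (Beep, Suc d mod T, False)
     else Some (Listen, Suc d mod T, ind))"
proof -
  have ci: "(\<exists>c\<in>C. [int d = int c - 1] (mod int T)) \<longleftrightarrow> Suc d mod T \<in> C"
    using cong_iff[OF assms(2)] C_lt by blast
  show ?thesis using assms(1) ci by (cases p) (auto simp: fs_step_def Let_def)
qed

lemma run_None:
  "cfg t v = None \<Longrightarrow> cfg (Suc t) v = (if act (Suc t) v \<or> hears E (cfg t) v then Some (Beep, 1, True) else None)"
  by (simp add: fs_step_def)

lemma lg_Some: "cfg t v = Some (p, d, ind) \<Longrightarrow>
   lg (Suc t) v = (if p = Listen \<and> hears E (cfg t) v \<and> Suc d mod T \<in> C then lg t v - 1 else lg t v)"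
  by simp

lemma lg_None: "cfg t v = None \<Longrightarrow> lg (Suc t) v = Suc t"
  by simp

definition inv1 where "inv1 t \<longleftrightarrow> (\<forall>v p d ind. cfg t v = Some (p, d, ind) \<longrightarrow> lg t v \<le> t \<and> d = Dl t v mod T)"
definition inv2 where "inv2 t \<longleftrightarrow> (\<forall>v d ind. cfg t v = Some (Beep, d, ind) \<longrightarrow>
    (ind \<longrightarrow> lg t v = t \<or> CPu (Dl t v - 1)) \<and> (\<not> ind \<longrightarrow> CPu (Dl t v)))"
definition inv3 where "inv3 t \<longleftrightarrow> (\<forall>u v. E u v \<longrightarrow> cfg t u \<noteq> None \<longrightarrow> cfg t v \<noteq> None \<longrightarrow>
    lg t u \<le> lg t v + 1 \<or> (lg t u = lg t v + 2 \<and> CPu (Suc (Dl t u)) \<and> beeping (cfg t) v))"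
definition inv4 where "inv4 t \<longleftrightarrow> (\<forall>u v. E u v \<longrightarrow> cfg t u \<noteq> None \<longrightarrow> cfg t v = None \<longrightarrow>
    lg t u = t \<and> beeping (cfg t) u)"
definition inv5 where "inv5 t \<longleftrightarrow> (\<forall>u d. cfg t u = Some (Listen, d, False) \<longrightarrow> lg t u = 0 \<longrightarrow>
    (\<forall>v. E u v \<longrightarrow> cfg t v \<noteq> None \<and> lg t v = 0))"
definition Inv where "Inv t \<longleftrightarrow> inv1 t \<and> inv2 t \<and> inv3 t \<and> inv4 t \<and> inv5 t"

lemma beeping_iff: "beeping c v \<longleftrightarrow> (\<exists>d ind. c v = Some (Beep, d, ind))"
  by (auto simp: beeping_def split: option.splits)

lemma Beep_not_pre:
  assumes "Inv t" "cfg t v = Some (Beep, d, ind)"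
  shows "\<not> CPu (Suc (Dl t v))"
proof
  assume pre: "CPu (Suc (Dl t v))"
  have l: "lg t v \<le> t" using assms unfolding Inv_def inv1_def by blast
  have i2: "(ind \<longrightarrow> lg t v = t \<or> CPu (Dl t v - 1)) \<and> (\<not> ind \<longrightarrow> CPu (Dl t v))"
    using assms unfolding Inv_def inv2_def by blast
  have D1: "Dl t v \<ge> 1" using l by (simp add: Dl_def)
  show False
  proof (cases ind)
    case True
    then have "lg t v = t \<or> CPu (Dl t v - 1)" using i2 by blast
    then show False
    proof
      assume "lg t v = t" then have "Suc (Dl t v) = 2" by (simp add: Dl_def)
      then show False using CPu_small[OF pre] by simp
    next
      assume h: "CPu (Dl t v - 1)"
      have "Dl t v - 1 < Suc (Dl t v) + 5" "Suc (Dl t v) < Dl t v - 1 + 5" using D1 by auto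
      then have "Dl t v - 1 = Suc (Dl t v)" using gap'[OF h pre] by blast
      then show False using D1 by linarith
    qed
  next
    case False
    then have h: "CPu (Dl t v)" using i2 by blast
    show False using gap'[OF h pre] by simp
  qed
qed

lemma jump_pos:
  assumes "Inv t" "cfg t v = Some (Listen, d, ind)" "CPu (Suc (Dl t v))" "hears E (cfg t) v"
  shows "1 \<le> lg t v"
proof (rule ccontr)
  assume "\<not> 1 \<le> lg t v"
  then have v0: "lg t v = 0" by simp
  obtain u where u: "E v u" "beeping (cfg t) u" using assms(4) unfolding hears_def by blast
  obtain du iu where cu: "cfg t u = Some (Beep, du, iu)" using u(2) by (auto simp: beeping_iff)
  have i3: "lg t u \<le> lg t v + 1 \<or> (lg t u = lg t v + 2 \<and> CPu (Suc (Dl t u)) \<and> beeping (cfg t) v)"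
    using assms(1) symE[OF u(1)] cu assms(2) unfolding Inv_def inv3_def by blast
  have nb: "\<not> beeping (cfg t) v" using assms(2) by (simp add: beeping_def)
  have lu: "lg t u \<le> 1" using i3 nb v0 by auto
  have ltu: "lg t u \<le> t" using assms(1) cu unfolding Inv_def inv1_def by blast
  have i2: "(iu \<longrightarrow> lg t u = t \<or> CPu (Dl t u - 1)) \<and> (\<not> iu \<longrightarrow> CPu (Dl t u))"
    using assms(1) cu unfolding Inv_def inv2_def by blast
  have x: "Suc (Dl t v) = t + 2" using v0 by (simp add: Dl_def)
  have Du: "Dl t u + 1 \<ge> t + 1" "Dl t u \<le> t + 1" using lu ltu by (auto simp: Dl_def)
  have "lg t u = t \<or> CPu (Dl t u - 1) \<or> CPu (Dl t u)" using i2 by blast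
  then show False
  proof (elim disjE)
    assume "lg t u = t" then have "t \<le> 1" using lu by simp
    then show False using CPu_small[OF assms(3)] x by simp
  next
    assume h: "CPu (Dl t u - 1)"
    have "Dl t u - 1 < Suc (Dl t v) + 5" "Suc (Dl t v) < Dl t u - 1 + 5" using x Du by auto
    then have "Dl t u - 1 = Suc (Dl t v)" using gap'[OF h assms(3)] by blast
    then show False using x Du by linarith
  next
    assume h: "CPu (Dl t u)"
    have "Dl t u < Suc (Dl t v) + 5" "Suc (Dl t v) < Dl t u + 5" using x Du by auto
    then have "Dl t u = Suc (Dl t v)" using gap'[OF h assms(3)] by blast
    then show False using x Du by linarith
  qed
qed

lemma step_cases:
  assumes I: "Inv t" and c: "cfg t v = Some (p, d, ind)"
  obtains (B) "p = Beep" "cfg (Suc t) v = Some (Listen, Suc (Dl t v) mod T, ind)"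
      "lg (Suc t) v = lg t v" "Dl (Suc t) v = Suc (Dl t v)"
  | (J) "p = Listen" "CPu (Suc (Dl t v))" "hears E (cfg t) v" "1 \<le> lg t v"
      "cfg (Suc t) v = Some (Beep, Suc (Suc (Dl t v)) mod T, True)"
      "lg (Suc t) v = lg t v - 1" "Dl (Suc t) v = Suc (Suc (Dl t v))"
  | (S) "p = Listen" "\<not> hears E (cfg t) v" "ind \<or> Suc (Dl t v) mod T = 0" "CPu (Suc (Dl t v))"
      "cfg (Suc t) v = Some (Beep, Suc (Dl t v) mod T, False)"
      "lg (Suc t) v = lg t v" "Dl (Suc t) v = Suc (Dl t v)"
  | (L) "p = Listen" "\<not> (CPu (Suc (Dl t v)) \<and> hears E (cfg t) v)"
      "\<not> (\<not> hears E (cfg t) v \<and> CPu (Suc (Dl t v)) \<and> (ind \<or> Suc (Dl t v) mod T = 0))"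
      "cfg (Suc t) v = Some (Listen, Suc (Dl t v) mod T, ind)"
      "lg (Suc t) v = lg t v" "Dl (Suc t) v = Suc (Dl t v)"
proof -
  have l: "lg t v \<le> t" and dd: "d = Dl t v mod T" using I c unfolding Inv_def inv1_def by blast+
  have dT: "d < T" using dd T5 by simp
  have s1: "Suc d mod T = Suc (Dl t v) mod T" using dd by (simp add: mod_Suc_eq)
  have s2: "Suc (Suc d) mod T = Suc (Suc (Dl t v)) mod T" using dd
    by (metis mod_Suc_eq)
  have cp: "Suc d mod T \<in> C \<longleftrightarrow> CPu (Suc (Dl t v))" using s1 by (simp add: CPu_def)
  have z: "Suc (Dl t v) mod T = 0 \<Longrightarrow> CPu (Suc (Dl t v))" using zero_C by (simp add: CPu_def)
  note R = run_Some[OF c dT] and G = lg_Some[OF c]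
  show thesis
  proof (cases p)
    case Beep
    then show thesis using B R G s1 l by (simp add: Dl_def Suc_diff_le)
  next
    case Listen
    show thesis
    proof (cases "CPu (Suc (Dl t v)) \<and> hears E (cfg t) v")
      case True
      have p1: "1 \<le> lg t v" using jump_pos[OF I] c Listen True by blast
      show thesis using J Listen True R G cp s2 p1 l by (simp add: Dl_def)
    next
      case False
      show thesis
      proof (cases "\<not> hears E (cfg t) v \<and> CPu (Suc (Dl t v)) \<and> (ind \<or> Suc (Dl t v) mod T = 0)")
        case True
        then show thesis using S Listen R G cp s1 l by (auto simp: Dl_def Suc_diff_le)
      next
        case False2: False
        have "cfg (Suc t) v = Some (Listen, Suc (Dl t v) mod T, ind)"
          using R Listen False False2 cp s1 z by auto
        then show thesis using L Listen False False2 G cp l by (auto simp: Dl_def Suc_diff_le)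
      qed
    qed
  qed
qed

end


context fsl begin

lemma Inv0: "Inv 0"
  using T5 by (auto simp: Inv_def inv1_def inv2_def inv3_def inv4_def inv5_def Dl_def beeping_def
      split: if_splits)

lemma lg_le: "Inv t \<Longrightarrow> cfg t v \<noteq> None \<Longrightarrow> lg t v \<le> t"
  unfolding Inv_def inv1_def by auto

lemma summ:
  assumes "Inv t" "cfg t v \<noteq> None"
  shows "cfg (Suc t) v \<noteq> None \<and>
    ((lg (Suc t) v = lg t v \<and> Dl (Suc t) v = Suc (Dl t v)) \<or>
     (lg (Suc t) v = lg t v - 1 \<and> 1 \<le> lg t v \<and> Dl (Suc t) v = Suc (Suc (Dl t v)) \<and>
      CPu (Suc (Dl t v)) \<and> beeping (cfg (Suc t)) v \<and> \<not> beeping (cfg t) v))"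
proof -
  obtain p d ind where c: "cfg t v = Some (p, d, ind)" using assms(2) by auto
  show ?thesis
    by (rule step_cases[OF assms(1) c]) (auto simp: beeping_def c)
qed

lemma jump_if:
  assumes "Inv t" "cfg t v = Some (p, d, ind)" "CPu (Suc (Dl t v))" "hears E (cfg t) v"
  shows "lg (Suc t) v = lg t v - 1 \<and> 1 \<le> lg t v"
proof -
  have pl: "p = Listen" using Beep_not_pre[OF assms(1)] assms(2,3) by (cases p) auto
  show ?thesis by (rule step_cases[OF assms(1) assms(2)]) (use assms pl in auto)
qed

lemma beep_nojump:
  assumes "Inv t" "beeping (cfg t) v" shows "lg (Suc t) v = lg t v"
proof -
  obtain d ind where c: "cfg t v = Some (Beep, d, ind)" using assms(2) by (auto simp: beeping_iff)
  show ?thesis by (rule step_cases[OF assms(1) c]) auto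
qed

lemma new_node:
  assumes "cfg t v = None" "cfg (Suc t) v \<noteq> None"
  shows "cfg (Suc t) v = Some (Beep, 1, True) \<and> lg (Suc t) v = Suc t \<and> Dl (Suc t) v = 1"
  using assms run_None[OF assms(1)] by (auto simp: Dl_def split: if_splits)

lemma inv1_Suc: "Inv t \<Longrightarrow> inv1 (Suc t)"
  unfolding inv1_def
proof (intro allI impI)
  fix v p d ind assume I: "Inv t" and c: "cfg (Suc t) v = Some (p, d, ind)"
  show "lg (Suc t) v \<le> Suc t \<and> d = Dl (Suc t) v mod T"
  proof (cases "cfg t v")
    case None
    then show ?thesis using new_node[OF None] c T5 by auto
  next
    case (Some a)
    then obtain p0 d0 i0 where c0: "cfg t v = Some (p0, d0, i0)" by (cases a) auto
    have l: "lg t v \<le> t" using lg_le[OF I] c0 by simp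
    show ?thesis by (rule step_cases[OF I c0]) (use c l in auto)
  qed
qed

lemma inv2_Suc: "Inv t \<Longrightarrow> inv2 (Suc t)"
  unfolding inv2_def
proof (intro allI impI)
  fix v d ind assume I: "Inv t" and c: "cfg (Suc t) v = Some (Beep, d, ind)"
  show "(ind \<longrightarrow> lg (Suc t) v = Suc t \<or> CPu (Dl (Suc t) v - 1)) \<and> (\<not> ind \<longrightarrow> CPu (Dl (Suc t) v))"
  proof (cases "cfg t v")
    case None
    then show ?thesis using new_node[OF None] c by auto
  next
    case (Some a)
    then obtain p0 d0 i0 where c0: "cfg t v = Some (p0, d0, i0)" by (cases a) auto
    show ?thesis by (rule step_cases[OF I c0]) (use c in auto)
  qed
qed

lemma inv4_Suc: "Inv t \<Longrightarrow> inv4 (Suc t)"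
  unfolding inv4_def
proof (intro allI impI)
  fix u v assume I: "Inv t" and e: "E u v" and cu: "cfg (Suc t) u \<noteq> None" and cv: "cfg (Suc t) v = None"
  have cv0: "cfg t v = None" using summ[OF I] cv by blast
  show "lg (Suc t) u = Suc t \<and> beeping (cfg (Suc t)) u"
  proof (cases "cfg t u")
    case None
    then show ?thesis using new_node[OF None cu] by (simp add: beeping_def)
  next
    case (Some a)
    then have "beeping (cfg t) u" using I e cv0 unfolding Inv_def inv4_def by blast
    then have "hears E (cfg t) v" using symE[OF e] by (auto simp: hears_def)
    then have "cfg (Suc t) v \<noteq> None" using run_None[OF cv0] by simp
    then show ?thesis using cv by simp
  qed
qed

lemma inv3_Suc: "Inv t \<Longrightarrow> inv3 (Suc t)"
  unfolding inv3_def
proof (intro allI impI)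
  fix u v assume I: "Inv t" and e: "E u v" and cu: "cfg (Suc t) u \<noteq> None" and cv: "cfg (Suc t) v \<noteq> None"
  show "lg (Suc t) u \<le> lg (Suc t) v + 1 \<or> (lg (Suc t) u = lg (Suc t) v + 2 \<and> CPu (Suc (Dl (Suc t) u)) \<and> beeping (cfg (Suc t)) v)"
  proof (cases "cfg t u = None")
    case un: True
    show ?thesis
    proof (cases "cfg t v = None")
      case True then show ?thesis using new_node[OF un cu] new_node[OF True cv] by simp
    next
      case False
      then have "lg t v = t \<and> beeping (cfg t) v" using I symE[OF e] un unfolding Inv_def inv4_def by blast
      then show ?thesis using new_node[OF un cu] beep_nojump[OF I] by simp
    qed
  next
    case ua: False
    show ?thesis
    proof (cases "cfg t v = None")
      case True
      then have "lg t u = t \<and> beeping (cfg t) u" using I e ua unfolding Inv_def inv4_def by blast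
      then show ?thesis using new_node[OF True cv] beep_nojump[OF I] by simp
    next
      case va: False
      have lu: "lg t u \<le> t" and lv: "lg t v \<le> t" using lg_le[OF I] ua va by auto
      have i3: "lg t u \<le> lg t v + 1 \<or> (lg t u = lg t v + 2 \<and> CPu (Suc (Dl t u)) \<and> beeping (cfg t) v)"
        using I e ua va unfolding Inv_def inv3_def by blast
      note su = summ[OF I ua] and sv = summ[OF I va]
      show ?thesis
      proof (cases "lg t u \<le> lg t v + 1")
        case True
        show ?thesis
        proof (cases "lg (Suc t) u \<le> lg (Suc t) v + 1")
          case True then show ?thesis by simp
        next
          case False
          then have h: "lg (Suc t) v = lg t v - 1" "1 \<le> lg t v" "CPu (Suc (Dl t v))"
            "beeping (cfg (Suc t)) v" "lg (Suc t) u = lg t u" "Dl (Suc t) u = Suc (Dl t u)"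
            using su sv \<open>lg t u \<le> lg t v + 1\<close> by auto
          have "lg t u = lg t v + 1" using h False \<open>lg t u \<le> lg t v + 1\<close> by linarith
          then have "Suc (Dl (Suc t) u) = Suc (Dl t v)" using h lu lv by (simp add: Dl_def)
          then show ?thesis using h \<open>lg t u = lg t v + 1\<close> by auto
        qed
      next
        case False
        then have tr: "lg t u = lg t v + 2" "CPu (Suc (Dl t u))" "beeping (cfg t) v" using i3 by auto
        obtain p d ind where c: "cfg t u = Some (p, d, ind)" using ua by auto
        have "hears E (cfg t) u" using e tr(3) by (auto simp: hears_def)
        then have "lg (Suc t) u = lg t u - 1" using jump_if[OF I c tr(2)] by blast
        then show ?thesis using beep_nojump[OF I tr(3)] tr(1) by simp
      qed
    qed
  qed
qed

lemma inv5_Suc: "Inv t \<Longrightarrow> inv5 (Suc t)"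
  unfolding inv5_def
proof (intro allI impI)
  fix u d v assume I: "Inv t" and c: "cfg (Suc t) u = Some (Listen, d, False)"
    and l0: "lg (Suc t) u = 0" and e: "E u v"
  have ua: "cfg t u \<noteq> None" using new_node[of t u] c by (cases "cfg t u") auto
  then obtain p0 d0 i0 where c0: "cfg t u = Some (p0, d0, i0)" by auto
  show "cfg (Suc t) v \<noteq> None \<and> lg (Suc t) v = 0"
  proof (rule step_cases[OF I c0])
    assume B: "p0 = Beep" "cfg (Suc t) u = Some (Listen, Suc (Dl t u) mod T, i0)"
      "lg (Suc t) u = lg t u" "Dl (Suc t) u = Suc (Dl t u)"
    have i0: "\<not> i0" using B(2) c by simp
    have lu: "lg t u = 0" using B(3) l0 by simp
    have cpu: "CPu (Dl t u)" using I c0 B(1) i0 unfolding Inv_def inv2_def by blast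
    have Du: "Dl t u = Suc t" using lu by (simp add: Dl_def)
    have bu: "beeping (cfg t) u" using c0 B(1) by (simp add: beeping_def)
    have va: "cfg t v \<noteq> None"
    proof
      assume "cfg t v = None"
      then have "lg t u = t" using I e ua unfolding Inv_def inv4_def by blast
      then show False using cpu Du lu CPu_small[of 1] by simp
    qed
    have lv: "lg t v \<le> t" using lg_le[OF I va] .
    have i3: "lg t v \<le> lg t u + 1 \<or> (lg t v = lg t u + 2 \<and> CPu (Suc (Dl t v)) \<and> beeping (cfg t) u)"
      using I symE[OF e] ua va unfolding Inv_def inv3_def by blast
    have "lg t v \<le> 1"
    proof (rule ccontr)
      assume "\<not> lg t v \<le> 1"
      then have "CPu (Suc (Dl t v))" "Suc (Dl t v) = t" using i3 lu lv by (auto simp: Dl_def)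
      then show False using gap'[of t "Suc t"] cpu Du by simp
    qed
    then consider "lg t v = 0" | "lg t v = 1" by linarith
    then show ?thesis
    proof cases
      case 1 then show ?thesis using summ[OF I va] by auto
    next
      case 2
      obtain p d ind where cv: "cfg t v = Some (p, d, ind)" using va by auto
      have "CPu (Suc (Dl t v))" using 2 cpu Du lv by (simp add: Dl_def)
      moreover have "hears E (cfg t) v" using symE[OF e] bu by (auto simp: hears_def)
      ultimately show ?thesis using jump_if[OF I cv] summ[OF I va] 2 by auto
    qed
  next
    assume "cfg (Suc t) u = Some (Beep, Suc (Suc (Dl t u)) mod T, True)" then show ?thesis using c by simp
  next
    assume "cfg (Suc t) u = Some (Beep, Suc (Dl t u) mod T, False)" then show ?thesis using c by simp
  next
    assume L: "p0 = Listen" "cfg (Suc t) u = Some (Listen, Suc (Dl t u) mod T, i0)" "lg (Suc t) u = lg t u"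
    have "\<not> i0" using L(2) c by simp
    then have "cfg t v \<noteq> None \<and> lg t v = 0" using I c0 L e l0 unfolding Inv_def inv5_def by auto
    then show ?thesis using summ[OF I] by fastforce
  qed
qed

lemma Inv_all: "Inv t"
  by (induction t) (use Inv0 inv1_Suc inv2_Suc inv3_Suc inv4_Suc inv5_Suc in \<open>auto simp: Inv_def\<close>)

end


lemma walk_snoc: "walk_len E a v (Suc n) \<Longrightarrow> \<exists>u. walk_len E a u n \<and> E u v"
proof (induction n arbitrary: a)
  case 0
  then show ?case by (auto elim: walk_len.cases intro: walk_len.intros)
next
  case (Suc n)
  from Suc.prems obtain w where w: "E a w" "walk_len E w v (Suc n)" by (auto elim: walk_len.cases)
  from Suc.IH[OF w(2)] obtain u where "walk_len E w u n" "E u v" by blast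
  then show ?case using w(1) by (auto intro: walk_len.intros)
qed

lemma walk0: "walk_len E a v 0 \<Longrightarrow> v = a"
  by (auto elim: walk_len.cases)

context fsl begin

lemma persist: assumes "cfg t v \<noteq> None" "t \<le> t'" shows "cfg t' v \<noteq> None \<and> lg t' v \<le> lg t v"
  using assms(2)
proof (induction t' rule: dec_induct)
  case base then show ?case using assms(1) by simp
next
  case (step n)
  then show ?case using summ[OF Inv_all, of n v] by auto
qed

lemma spread: "cfg t u \<noteq> None \<Longrightarrow> E u v \<Longrightarrow> cfg (Suc t) v \<noteq> None"
proof (cases "cfg t v")
  case None
  assume a: "cfg t u \<noteq> None" "E u v"
  then have "beeping (cfg t) u" using Inv_all[of t] None unfolding Inv_def inv4_def by blast
  then have "hears E (cfg t) v" using symE[OF a(2)] by (auto simp: hears_def)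
  then show ?thesis using run_None[OF None] by simp
next
  case (Some x) then show ?thesis using summ[OF Inv_all, of t v] by auto
qed

lemma walk_active: "act 0 a \<Longrightarrow> walk_len E a v k \<Longrightarrow> cfg k v \<noteq> None"
proof (induction k arbitrary: v)
  case 0 then show ?case using walk0[OF 0(2)] by simp
next
  case (Suc k)
  obtain u where "walk_len E a u k" "E u v" using walk_snoc[OF Suc(3)] by blast
  then show ?case using Suc spread by blast
qed

lemma conv:
  assumes a: "act 0 a"
  shows "walk_len E a v k \<Longrightarrow> j \<le> k \<Longrightarrow> cp j + k - j \<le> t \<Longrightarrow> cfg t v \<noteq> None \<and> lg t v \<le> k - j"
proof (induction k arbitrary: v j t)
  case 0
  then have "v = a" "j = 0" using walk0 by auto
  then show ?case using persist[of 0 a t] a by simp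
next
  case (Suc k)
  obtain u where wu: "walk_len E a u k" and e: "E u v" using walk_snoc[OF Suc(2)] by blast
  note IHu = Suc.IH[OF wu]
  have actv: "cfg (Suc k) v \<noteq> None" using walk_active[OF a Suc(2)] .
  have "\<forall>t. cp j + Suc k - j \<le> t \<longrightarrow> cfg t v \<noteq> None \<and> lg t v \<le> Suc k - j" if "j \<le> Suc k" for j
    using that
  proof (induction j)
    case 0
    show ?case
    proof (intro allI impI)
      fix t assume "cp 0 + Suc k - 0 \<le> t"
      then have "Suc k \<le> t" by (simp add: cp0)
      then show "cfg t v \<noteq> None \<and> lg t v \<le> Suc k - 0"
        using persist[OF actv] lg_le[OF Inv_all actv] by force
    qed
  next
    case (Suc j)
    have jk: "j \<le> k" using Suc.prems by simp
    note IHj = Suc.IH[OF Suc_leD[OF Suc.prems]]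
    have g: "cp j + q \<le> cp (Suc j)" by (rule cp_gap)
    define t0 where "t0 = cp (Suc j) + k - j"
    define \<tau> where "\<tau> = t0 - 1"
    have t0: "t0 = Suc \<tau>" using g q5 jk unfolding \<tau>_def t0_def by simp
    have \<tau>ge: "cp j + Suc k - j \<le> \<tau>" using g q5 jk unfolding \<tau>_def t0_def by simp
    have av: "cfg \<tau> v \<noteq> None" and lt: "lg \<tau> v \<le> Suc k - j" using IHj \<tau>ge by auto
    have key: "lg t0 v \<le> k - j"
    proof (rule ccontr)
      assume nk: "\<not> lg t0 v \<le> k - j"
      have mono: "lg t0 v \<le> lg \<tau> v" using persist[OF av, of t0] t0 by simp
      have L: "lg \<tau> v = Suc k - j" "lg t0 v = lg \<tau> v" using nk mono lt jk by auto
      have lvt: "lg \<tau> v \<le> \<tau>" using lg_le[OF Inv_all av] .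
      have Dv: "Suc (Dl \<tau> v) = cp (Suc j)" using L(1) lvt jk g q5
        unfolding Dl_def \<tau>_def t0_def by simp
      have pre: "CPu (Suc (Dl \<tau> v))" using Dv cp_CPu by simp
      obtain pv dv iv where cv: "cfg \<tau> v = Some (pv, dv, iv)" using av by auto
      have nohear: "\<not> hears E (cfg \<tau>) v"
      proof
        assume "hears E (cfg \<tau>) v"
        then have "lg (Suc \<tau>) v = lg \<tau> v - 1 \<and> 1 \<le> lg \<tau> v" using jump_if[OF Inv_all cv pre] by blast
        then show False using L t0 by simp
      qed
      have nbu: "\<not> beeping (cfg \<tau>) u"
        using nohear symE[OF e] by (auto simp: hears_def)
      show False
      proof (cases "j < k")
        case True
        have "cp (Suc j) + k - Suc j \<le> \<tau>" unfolding \<tau>_def t0_def using True by simp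
        then have au: "cfg \<tau> u \<noteq> None" and lu: "lg \<tau> u \<le> k - Suc j"
          using IHu[of "Suc j" \<tau>] True by auto
        have "lg \<tau> v \<le> lg \<tau> u + 1 \<or> (lg \<tau> v = lg \<tau> u + 2 \<and> CPu (Suc (Dl \<tau> v)) \<and> beeping (cfg \<tau>) u)"
          using Inv_all[of \<tau>] symE[OF e] au av unfolding Inv_def inv3_def by blast
        then show False using nbu lu L True by auto
      next
        case False
        then have jk': "j = k" using jk by simp
        define \<sigma> where "\<sigma> = \<tau> - 1"
        have st: "\<tau> = Suc \<sigma>" using g q5 jk' unfolding \<sigma>_def \<tau>_def t0_def by simp
        have "cp k + k - k \<le> \<sigma>" using g q5 jk' unfolding \<sigma>_def \<tau>_def t0_def by simp
        then have au: "cfg \<sigma> u \<noteq> None" and lu: "lg \<sigma> u = 0" using IHu[of k \<sigma>] by auto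
        have "cp j + Suc k - j \<le> \<sigma>" using g q5 jk' unfolding \<sigma>_def \<tau>_def t0_def by simp
        then have avs: "cfg \<sigma> v \<noteq> None" and lvs: "lg \<sigma> v \<le> 1" using IHj jk' by auto
        have "lg \<tau> v \<le> lg \<sigma> v" using persist[OF avs, of \<tau>] st by simp
        then have lvs1: "lg \<sigma> v = 1" using L jk' lvs by simp
        have Du: "Suc (Dl \<sigma> u) = cp (Suc j)" using lu Dv L jk' st
          unfolding Dl_def by simp
        have preu: "CPu (Suc (Dl \<sigma> u))" using Du cp_CPu by simp
        obtain pu du iu where cu: "cfg \<sigma> u = Some (pu, du, iu)" using au by auto
        have pl: "pu = Listen" using Beep_not_pre[OF Inv_all] cu preu by (cases pu) auto
        have iu: "iu"
        proof (rule ccontr)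
          assume "\<not> iu"
          then have "cfg \<sigma> v \<noteq> None \<and> lg \<sigma> v = 0"
            using Inv_all[of \<sigma>] cu pl lu e unfolding Inv_def inv5_def by auto
          then show False using lvs1 by simp
        qed
        have nhu: "\<not> hears E (cfg \<sigma>) u"
        proof
          assume "hears E (cfg \<sigma>) u"
          then show False using jump_if[OF Inv_all cu preu] lu by simp
        qed
        have "beeping (cfg (Suc \<sigma>)) u"
          by (rule step_cases[OF Inv_all cu]) (use pl nhu preu iu in \<open>auto simp: beeping_def\<close>)
        then show False using nbu st by simp
      qed
    qed
    show ?case
    proof (intro allI impI)
      fix t assume "cp (Suc j) + Suc k - Suc j \<le> t"
      then have "t0 \<le> t" unfolding t0_def by simp
      moreover have "cfg t0 v \<noteq> None" using persist[OF av, of t0] t0 by simp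
      ultimately show "cfg t v \<noteq> None \<and> lg t v \<le> Suc k - Suc j" using persist[of t0 v t] key by auto
    qed
  qed
  then show ?case using Suc.prems by blast
qed

end


theorem mainTheorem2:
  fixes T q :: nat and V :: "'v set" and E :: "'v \<Rightarrow> 'v \<Rightarrow> bool"
    and act :: "nat \<Rightarrow> 'v \<Rightarrow> bool"
  assumes "T \<ge> 5" and "5 \<le> q" and "q \<le> T"
    and "ugraph V E" and "gconnected V E"
    and "\<exists>v\<in>V. act 0 v"
  shows "\<forall>t \<ge> q * diameter V E + (diameter V E div (T div q)) * (T mod q).
           \<exists>d. \<forall>v\<in>V. \<exists>p ind. fs_run T (CP_q q T) E act t v = Some (p, d, ind)"
proof (intro allI impI)
  fix t assume tb: "q * diameter V E + (diameter V E div (T div q)) * (T mod q) \<le> t"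
  interpret F: fsl T q E act
    using assms by unfold_locales (auto simp: ugraph_def)
  obtain a where a: "a \<in> V" "act 0 a" using assms(6) by blast
  have fin: "finite V" using assms(4) by (simp add: ugraph_def)
  have lag0: "fs_run T (CP_q q T) E act t v \<noteq> None \<and> lagr T (CP_q q T) E act t v = 0" if v: "v \<in> V" for v
  proof -
    have "\<exists>n. walk_len E a v n" using assms(5) a v by (simp add: gconnected_def)
    then have w: "walk_len E a v (gdist E a v)" unfolding gdist_def by (rule LeastI_ex)
    have "{gdist E u w | u w. u \<in> V \<and> w \<in> V} = (\<lambda>(u, w). gdist E u w) ` (V \<times> V)" by auto
    then have "finite {gdist E u w | u w. u \<in> V \<and> w \<in> V}" using fin by simp
    then have gd: "gdist E a v \<le> diameter V E" unfolding diameter_def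
      using a(1) v by (intro Max_ge) auto
    have "F.cp (gdist E a v) \<le> F.cp (diameter V E)" using F.cp_mono[OF gd] .
    then have "F.cp (gdist E a v) + gdist E a v - gdist E a v \<le> t"
      using tb unfolding F.cp_def by simp
    then have "fs_run T (CP_q q T) E act t v \<noteq> None \<and> lagr T (CP_q q T) E act t v \<le> 0"
      using F.conv[OF a(2) w, of "gdist E a v" t] by simp
    then show ?thesis by simp
  qed
  show "\<exists>d. \<forall>v\<in>V. \<exists>p ind. fs_run T (CP_q q T) E act t v = Some (p, d, ind)"
  proof (rule exI, rule ballI)
    fix v assume v: "v \<in> V"
    obtain p d ind where c: "fs_run T (CP_q q T) E act t v = Some (p, d, ind)" using lag0[OF v] by auto
    have "d = F.Dl t v mod T" using F.Inv_all[of t] c unfolding F.Inv_def F.inv1_def by blast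
    then have "d = Suc t mod T" using lag0[OF v] by (simp add: F.Dl_def)
    then show "\<exists>p ind. fs_run T (CP_q q T) E act t v = Some (p, Suc t mod T, ind)" using c by blast
  qed
qed



end
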